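(* Let $f:(k+1)^V\to\mathbb{R}$ be $k$-submodular with multilinear extension $F$, and let $e_{i,j}\in\mathbb{R}^{n\times k}$ denote the standard basis vector with a $1$ in coordinate $(i,j)$. Then: (1) for every $x\in\mathcal P$ and every direction $d\in\mathbb{R}^{n\times k}$ with $d\ge 0$, the function $t\mapsto F(x+td)$ is concave on $\{t: x+td\in\mathcal P\}$; (2) for every $x\in\mathcal P$ and all $i_1\neq i_2\in[n]$, $j_1,j_2\in[k]$, the function $t\mapsto F(x+t(e_{i_1,j_1}-e_{i_2,j_2}))$ is convex on $\{t: x+t(e_{i_1,j_1}-e_{i_2,j_2})\in\mathcal P\}$; (3) for all $i\in[n]$, $j\in[k]$, $\partial F/\partial x_{i,j}$ does not depend on the coordinates $x_{i,1},\dots,x_{i,k}$ (it is constant when all $x_{i',j'}$ with $i'\neq i$ are fixed); (4) if $x,y\in\mathcal P$ with $x\le y$ entrywise, then $\frac{\partial F}{\partial x_{i,j}}(x)\ge\frac{\partial F}{\partial x_{i,j}}(y)$ for all $i\in[n]$, $j\in[k]$.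
   Context: Let $V=[n]=\{1,\dots,n\}$ and let $k\ge 1$ be an integer. Write $(k+1)^V$ for the set of $k$-tuples $S=(S_1,\dots,S_k)$ of pairwise disjoint subsets of $V$. For $S,T\in(k+1)^V$ let $S\sqcap T=(S_1\cap T_1,\dots,S_k\cap T_k)$ and let $S\sqcup T$ be the tuple whose $j$-th component is $(S_j\cup T_j)\setminus\bigcup_{l\neq j}(S_l\cup T_l)$. A function $f:(k+1)^V\to\mathbb{R}$ is $k$-submodular if $f(S)+f(T)\ge f(S\sqcap T)+f(S\sqcup T)$ for all $S,T\in(k+1)^V$. Let $\mathcal P=\{x\in[0,1]^{n\times k}:\sum_{j=1}^k x_{i,j}\le 1\ \forall i\in[n]\}$. The multilinear extension of $f$ is the polynomial $F(x)=\sum_{S\in(k+1)^V} f(S_1,\dots,S_k)\Big(\prod_{j\in[k]}\prod_{i\in S_j}x_{i,j}\Big)\prod_{i\in V\setminus\bigcup_j S_j}\Big(1-\sum_{j=1}^k x_{i,j}\Big)$, considered on $\mathcal P$. *)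

theory Defs
  imports "HOL-Analysis.Analysis"
begin

definition ktuples :: "nat \<Rightarrow> nat \<Rightarrow> (nat \<Rightarrow> nat set) set" where
  "ktuples n k = {S. (\<forall>j\<in>{1..k}. S j \<subseteq> {1..n}) \<and> (\<forall>j. j \<notin> {1..k} \<longrightarrow> S j = {})
      \<and> (\<forall>j\<in>{1..k}. \<forall>l\<in>{1..k}. j \<noteq> l \<longrightarrow> S j \<inter> S l = {})}"

definition kmeet :: "(nat \<Rightarrow> nat set) \<Rightarrow> (nat \<Rightarrow> nat set) \<Rightarrow> (nat \<Rightarrow> nat set)" where
  "kmeet S T = (\<lambda>j. S j \<inter> T j)"

definition kjoin :: "nat \<Rightarrow> (nat \<Rightarrow> nat set) \<Rightarrow> (nat \<Rightarrow> nat set) \<Rightarrow> (nat \<Rightarrow> nat set)" where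
  "kjoin k S T = (\<lambda>j. if j \<in> {1..k}
      then (S j \<union> T j) - (\<Union>l\<in>{1..k} - {j}. S l \<union> T l) else {})"

definition k_submodular :: "nat \<Rightarrow> nat \<Rightarrow> ((nat \<Rightarrow> nat set) \<Rightarrow> real) \<Rightarrow> bool" where
  "k_submodular n k f \<longleftrightarrow> (\<forall>S\<in>ktuples n k. \<forall>T\<in>ktuples n k.
      f S + f T \<ge> f (kmeet S T) + f (kjoin k S T))"

text \<open>Points of R^(n x k) are functions x :: nat => nat => real; only the coordinates
  x i j with i in {1..n}, j in {1..k} are relevant.\<close>
definition polytopeP :: "nat \<Rightarrow> nat \<Rightarrow> (nat \<Rightarrow> nat \<Rightarrow> real) set" where
  "polytopeP n k = {x. \<forall>i\<in>{1..n}. (\<forall>j\<in>{1..k}. 0 \<le> x i j \<and> x i j \<le> 1)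
      \<and> (\<Sum>j=1..k. x i j) \<le> 1}"

definition multilinear_ext :: "nat \<Rightarrow> nat \<Rightarrow> ((nat \<Rightarrow> nat set) \<Rightarrow> real) \<Rightarrow> (nat \<Rightarrow> nat \<Rightarrow> real) \<Rightarrow> real" where
  "multilinear_ext n k f x = (\<Sum>S\<in>ktuples n k.
      f S * (\<Prod>j\<in>{1..k}. \<Prod>i\<in>S j. x i j)
          * (\<Prod>i\<in>{1..n} - (\<Union>j\<in>{1..k}. S j). 1 - (\<Sum>j=1..k. x i j)))"

definition basis_vec :: "nat \<Rightarrow> nat \<Rightarrow> (nat \<Rightarrow> nat \<Rightarrow> real)" where
  "basis_vec i j = (\<lambda>a b. if a = i \<and> b = j then 1 else 0)"

definition line_pt :: "(nat \<Rightarrow> nat \<Rightarrow> real) \<Rightarrow> real \<Rightarrow> (nat \<Rightarrow> nat \<Rightarrow> real) \<Rightarrow> (nat \<Rightarrow> nat \<Rightarrow> real)" where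
  "line_pt x t d = (\<lambda>a b. x a b + t * d a b)"

definition partial :: "((nat \<Rightarrow> nat \<Rightarrow> real) \<Rightarrow> real) \<Rightarrow> nat \<Rightarrow> nat \<Rightarrow> (nat \<Rightarrow> nat \<Rightarrow> real) \<Rightarrow> real" where
  "partial G i j x = deriv (\<lambda>t. G (x(i := (x i)(j := t)))) (x i j)"

end

theory Submission imports Defs begin

definition wt :: "nat \<Rightarrow> (nat \<Rightarrow> nat \<Rightarrow> real) \<Rightarrow> nat \<Rightarrow> nat \<Rightarrow> real" where
 "wt k x v a = (if a = 0 then 1 - (\<Sum>j=1..k. x v j) else x v a)"

definition Mx :: "nat \<Rightarrow> nat set \<Rightarrow> ((nat \<Rightarrow> nat) \<Rightarrow> real) \<Rightarrow> (nat \<Rightarrow> nat \<Rightarrow> real) \<Rightarrow> real" where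
 "Mx k W h x = (\<Sum>\<sigma>\<in>PiE W (\<lambda>_. {0..k}). h \<sigma> * (\<Prod>v\<in>W. wt k x v (\<sigma> v)))"

definition Dfun :: "nat \<Rightarrow> nat set \<Rightarrow> ((nat \<Rightarrow> nat) \<Rightarrow> real) \<Rightarrow> nat \<Rightarrow> nat \<Rightarrow> (nat \<Rightarrow> nat \<Rightarrow> real) \<Rightarrow> real" where
 "Dfun k W h i j y = Mx k (W - {i}) (\<lambda>\<tau>. h (\<tau>(i:=j)) - h (\<tau>(i:=0))) y"

definition okrow :: "nat \<Rightarrow> (nat \<Rightarrow> nat \<Rightarrow> real) \<Rightarrow> nat \<Rightarrow> bool" where
 "okrow k x v \<longleftrightarrow> (\<forall>j\<in>{1..k}. 0 \<le> x v j) \<and> (\<Sum>j=1..k. x v j) \<le> 1"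

definition tup :: "nat \<Rightarrow> nat \<Rightarrow> (nat \<Rightarrow> nat) \<Rightarrow> (nat \<Rightarrow> nat set)" where
 "tup n k \<sigma> = (\<lambda>l. if l \<in> {1..k} then {u\<in>{1..n}. \<sigma> u = l} else {})"

lemma Mx_insert:
  assumes "finite W" "i \<notin> W"
  shows "Mx k (insert i W) h x = (\<Sum>a=0..k. wt k x i a * Mx k W (\<lambda>\<tau>. h (\<tau>(i:=a))) x)"
proof -
  have "Mx k (insert i W) h x = (\<Sum>p\<in>{0..k} \<times> PiE W (\<lambda>_. {0..k}). (\<lambda>\<sigma>. h \<sigma> * (\<Prod>v\<in>insert i W. wt k x v (\<sigma> v))) ((\<lambda>(y, g). g(i := y)) p))"
    unfolding Mx_def PiE_insert_eq
    by (subst sum.reindex[OF inj_combinator[OF assms(2)]]) (simp add: o_def)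
  also have "\<dots> = (\<Sum>a\<in>{0..k}. \<Sum>\<tau>\<in>PiE W (\<lambda>_. {0..k}). h (\<tau>(i:=a)) * (wt k x i a * (\<Prod>v\<in>W. wt k x v (\<tau> v))))"
  proof -
    have eq: "(\<Prod>v\<in>insert i W. wt k x v ((\<tau>(i:=a)) v)) = wt k x i a * (\<Prod>v\<in>W. wt k x v (\<tau> v))" for a \<tau>
    proof -
      have "(\<Prod>v\<in>insert i W. wt k x v ((\<tau>(i:=a)) v)) = wt k x i a * (\<Prod>v\<in>W. wt k x v ((\<tau>(i:=a)) v))"
        using assms by (simp add: prod.insert)
      also have "(\<Prod>v\<in>W. wt k x v ((\<tau>(i:=a)) v)) = (\<Prod>v\<in>W. wt k x v (\<tau> v))"
        using assms(2) by (intro prod.cong) auto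
      finally show ?thesis .
    qed
    show ?thesis unfolding sum.cartesian_product
      by (intro sum.cong refl) (auto simp: eq[simplified])
  qed
  also have "\<dots> = (\<Sum>a=0..k. wt k x i a * Mx k W (\<lambda>\<tau>. h (\<tau>(i:=a))) x)"
    by (simp add: Mx_def sum_distrib_left algebra_simps)
  finally show ?thesis .
qed

lemma Mx_indep:
  assumes "\<forall>v\<in>W. \<forall>j\<in>{1..k}. x v j = y v j"
  shows "Mx k W h x = Mx k W h y"
  unfolding Mx_def
proof (intro sum.cong refl arg_cong[where f="\<lambda>u. _ * u"] prod.cong)
  fix \<sigma> v assume s: "\<sigma> \<in> PiE W (\<lambda>_. {0..k})" and v: "v \<in> W"
  then have "\<sigma> v \<in> {0..k}" by auto
  then show "wt k x v (\<sigma> v) = wt k y v (\<sigma> v)"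
    using assms v unfolding wt_def by (auto intro!: sum.cong)
qed

lemma Mx_diff: "Mx k W (\<lambda>\<tau>. h1 \<tau> - h2 \<tau>) x = Mx k W h1 x - Mx k W h2 x"
  by (simp add: Mx_def sum_subtractf left_diff_distrib)

lemma wt_nonneg: "okrow k x v \<Longrightarrow> a \<le> k \<Longrightarrow> 0 \<le> wt k x v a"
  unfolding okrow_def wt_def by auto

lemma Mx_mono:
  assumes "\<forall>v\<in>W. okrow k x v" "\<forall>\<tau>. h1 \<tau> \<le> h2 \<tau>"
  shows "Mx k W h1 x \<le> Mx k W h2 x"
  unfolding Mx_def
proof (intro sum_mono mult_right_mono prod_nonneg)
  fix \<sigma> v assume s: "\<sigma> \<in> PiE W (\<lambda>_. {0..k})" and v: "v \<in> W"
  then show "0 \<le> wt k x v (\<sigma> v)" using assms(1) by (auto intro!: wt_nonneg)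
qed (use assms in auto)

lemma sum_wt: "(\<Sum>a=0..k. wt k z i a * c a) = c 0 + (\<Sum>j=1..k. z i j * (c j - c 0))"
proof -
  have e: "{0..k} = insert 0 {1..k}" by auto
  have "(\<Sum>a=0..k. wt k z i a * c a) = (1 - (\<Sum>j=1..k. z i j)) * c 0 + (\<Sum>j=1..k. z i j * c j)"
    unfolding e by (subst sum.insert) (auto simp: wt_def intro!: sum.cong)
  also have "\<dots> = c 0 + (\<Sum>j=1..k. z i j * (c j - c 0))"
    by (simp add: sum_subtractf sum_distrib_right sum_distrib_left right_diff_distrib algebra_simps)
  finally show ?thesis .
qed

lemma Mx_anti:
  assumes "finite W" "\<forall>v\<in>W. okrow k x v" "\<forall>v\<in>W. okrow k y v"
    "\<forall>v\<in>W. \<forall>j\<in>{1..k}. x v j \<le> y v j"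
    "\<forall>\<tau>. \<forall>v\<in>W. \<forall>j\<in>{1..k}. h (\<tau>(v:=j)) \<le> h (\<tau>(v:=0))"
  shows "Mx k W h y \<le> Mx k W h x"
  using assms
proof (induction W arbitrary: h rule: finite_induct)
  case empty
  have "Mx k {} h y = Mx k {} h x" by (rule Mx_indep) simp
  then show ?case by simp
next
  case (insert i W)
  define c where "c z a = Mx k W (\<lambda>\<tau>. h (\<tau>(i:=a))) z" for z a
  have IH: "c y a \<le> c x a" for a
    unfolding c_def
  proof (rule insert.IH)
    show "\<forall>\<tau>. \<forall>v\<in>W. \<forall>j\<in>{1..k}. h (\<tau>(v := j, i := a)) \<le> h (\<tau>(v := 0, i := a))"
    proof (intro allI ballI)
      fix \<tau> v j assume v: "v \<in> W" and j: "j \<in> {1..k}"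
      then have "v \<noteq> i" using insert.hyps by auto
      then have "\<tau>(v := j, i := a) = (\<tau>(i:=a))(v:=j)" "\<tau>(v := 0, i := a) = (\<tau>(i:=a))(v:=0)"
        by (auto simp: fun_upd_twist)
      moreover have "h ((\<tau>(i:=a))(v:=j)) \<le> h ((\<tau>(i:=a))(v:=0))"
        using insert.prems(4) v j by blast
      ultimately show "h (\<tau>(v := j, i := a)) \<le> h (\<tau>(v := 0, i := a))"
        by simp
    qed
  qed (use insert.prems in auto)
  have cm: "c y j \<le> c y 0" if "j \<in> {1..k}" for j
    unfolding c_def by (rule Mx_mono) (use insert.prems(2) in blast, use insert.prems(4) that in blast)
  have "Mx k (insert i W) h y = c y 0 + (\<Sum>j=1..k. y i j * (c y j - c y 0))"
    using insert.hyps by (simp add: Mx_insert sum_wt c_def)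
  also have "\<dots> \<le> c y 0 + (\<Sum>j=1..k. x i j * (c y j - c y 0))"
    by (intro add_left_mono sum_mono mult_right_mono_neg) (use cm insert.prems(3) in auto)
  also have "\<dots> = (\<Sum>a=0..k. wt k x i a * c y a)" by (simp add: sum_wt)
  also have "\<dots> \<le> (\<Sum>a=0..k. wt k x i a * c x a)"
    by (intro sum_mono mult_left_mono IH wt_nonneg) (use insert.prems in auto)
  also have "\<dots> = Mx k (insert i W) h x"
    using insert.hyps by (simp add: Mx_insert c_def)
  finally show ?case .
qed

definition dw :: "nat \<Rightarrow> (nat \<Rightarrow> nat \<Rightarrow> real) \<Rightarrow> nat \<Rightarrow> nat \<Rightarrow> real" where
  "dw k d i a = (if a = 0 then - (\<Sum>j=1..k. d i j) else d i a)"

lemma wt_line: "wt k (line_pt x t d) i a = wt k x i a + t * dw k d i a"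
  by (simp add: wt_def dw_def line_pt_def sum.distrib sum_distrib_left)

lemma sum_dw: "(\<Sum>a=0..k. dw k d i a * c a) = (\<Sum>j=1..k. d i j * (c j - c 0))"
proof -
  have e: "{0..k} = insert 0 {1..k}" by auto
  have "(\<Sum>a=0..k. dw k d i a * c a) = - (\<Sum>j=1..k. d i j) * c 0 + (\<Sum>j=1..k. d i j * c j)"
    unfolding e by (subst sum.insert) (auto simp: dw_def intro!: sum.cong)
  also have "\<dots> = (\<Sum>j=1..k. d i j * (c j - c 0))"
    by (simp add: sum_subtractf sum_distrib_right sum_distrib_left right_diff_distrib algebra_simps)
  finally show ?thesis .
qed

lemma Mx_deriv:
  assumes "finite W"
  shows "((\<lambda>t. Mx k W h (line_pt x t d)) has_real_derivative
     (\<Sum>i\<in>W. \<Sum>j=1..k. d i j * Dfun k W h i j (line_pt x t d))) (at t)"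
  using assms
proof (induction W arbitrary: h t rule: finite_induct)
  case empty
  have "(\<lambda>t. Mx k {} h (line_pt x t d)) = (\<lambda>t. Mx k {} h x)"
    by (rule ext, rule Mx_indep) simp
  then show ?case by simp
next
  case (insert i W)
  define c where "c a t = Mx k W (\<lambda>\<tau>. h (\<tau>(i:=a))) (line_pt x t d)" for a t
  define c' where "c' a t = (\<Sum>i'\<in>W. \<Sum>j=1..k. d i' j * Dfun k W (\<lambda>\<tau>. h (\<tau>(i:=a))) i' j (line_pt x t d))" for a t
  have D: "(c a has_real_derivative c' a s) (at s)" for a s
    unfolding c_def c'_def by (rule insert.IH)
  have fn: "(\<lambda>t. Mx k (insert i W) h (line_pt x t d)) = (\<lambda>t. \<Sum>a=0..k. (wt k x i a + t * dw k d i a) * c a t)"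
    using insert.hyps by (simp add: Mx_insert wt_line c_def)
  have D2: "((\<lambda>t. \<Sum>a=0..k. (wt k x i a + t * dw k d i a) * c a t) has_real_derivative
      (\<Sum>a=0..k. dw k d i a * c a t + (wt k x i a + t * dw k d i a) * c' a t)) (at t)"
    by (intro DERIV_sum) (auto intro!: derivative_eq_intros D)
  let ?y = "line_pt x t d"
  have p1: "(\<Sum>a=0..k. dw k d i a * c a t) = (\<Sum>j=1..k. d i j * Dfun k (insert i W) h i j ?y)"
  proof -
    have "insert i W - {i} = W" using insert.hyps by auto
    then have "Dfun k (insert i W) h i j ?y = c j t - c 0 t" for j
      by (simp add: Dfun_def c_def Mx_diff)
    then show ?thesis by (simp add: sum_dw)
  qed
  have p2: "(\<Sum>a=0..k. wt k ?y i a * c' a t) = (\<Sum>i'\<in>W. \<Sum>j=1..k. d i' j * Dfun k (insert i W) h i' j ?y)"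
  proof -
    have e: "Dfun k (insert i W) h i' j ?y = (\<Sum>a=0..k. wt k ?y i a * Dfun k W (\<lambda>\<tau>. h (\<tau>(i:=a))) i' j ?y)"
      if "i' \<in> W" for i' j
    proof -
      have ii: "i' \<noteq> i" using that insert.hyps by auto
      have "insert i W - {i'} = insert i (W - {i'})" using ii by auto
      then have "Dfun k (insert i W) h i' j ?y = Mx k (insert i (W - {i'})) (\<lambda>\<tau>. h (\<tau>(i' := j)) - h (\<tau>(i' := 0))) ?y"
        by (simp add: Dfun_def)
      also have "\<dots> = (\<Sum>a=0..k. wt k ?y i a * Mx k (W - {i'}) (\<lambda>\<tau>. h (\<tau>(i:=a, i' := j)) - h (\<tau>(i:=a, i' := 0))) ?y)"
        using insert.hyps by (subst Mx_insert) auto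
      also have "\<dots> = (\<Sum>a=0..k. wt k ?y i a * Dfun k W (\<lambda>\<tau>. h (\<tau>(i:=a))) i' j ?y)"
        unfolding Dfun_def using ii by (simp add: fun_upd_twist)
      finally show ?thesis .
    qed
    have "(\<Sum>i'\<in>W. \<Sum>j=1..k. d i' j * Dfun k (insert i W) h i' j ?y)
       = (\<Sum>i'\<in>W. \<Sum>j=1..k. \<Sum>a=0..k. wt k ?y i a * (d i' j * Dfun k W (\<lambda>\<tau>. h (\<tau>(i:=a))) i' j ?y))"
      by (intro sum.cong refl) (simp add: e sum_distrib_left algebra_simps)
    also have "\<dots> = (\<Sum>a=0..k. wt k ?y i a * c' a t)"
      unfolding c'_def sum_distrib_left
      by (subst sum.swap, subst (2) sum.swap) simp
    finally show ?thesis by simp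
  qed
  have "(\<Sum>a=0..k. dw k d i a * c a t + (wt k x i a + t * dw k d i a) * c' a t)
      = (\<Sum>ii\<in>insert i W. \<Sum>j=1..k. d ii j * Dfun k (insert i W) h ii j ?y)"
    using insert.hyps p1 p2 by (simp add: sum.distrib wt_line)
  with D2 fn show ?case by simp
qed

lemma partial_Mx:
  assumes "finite V" "i \<in> V" "j \<in> {1..k}"
  shows "partial (Mx k V h) i j x = Dfun k V h i j x"
proof -
  define W where "W = V - {i}"
  have V: "V = insert i W" "i \<notin> W" "finite W" using assms unfolding W_def by auto
  define c where "c a = Mx k W (\<lambda>\<tau>. h (\<tau>(i:=a))) x" for a
  define A where "A = c 0 + (\<Sum>j'\<in>{1..k}-{j}. x i j' * (c j' - c 0))"
  have fn: "Mx k V h (x(i := (x i)(j := t))) = A + t * (c j - c 0)" for t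
  proof -
    let ?x = "x(i := (x i)(j := t))"
    have "Mx k V h ?x = (\<Sum>a=0..k. wt k ?x i a * Mx k W (\<lambda>\<tau>. h (\<tau>(i:=a))) ?x)"
      using V by (simp add: Mx_insert)
    also have "\<dots> = (\<Sum>a=0..k. wt k ?x i a * c a)"
    proof (intro sum.cong refl arg_cong[where f="\<lambda>u. _ * u"])
      fix a show "Mx k W (\<lambda>\<tau>. h (\<tau>(i:=a))) ?x = c a"
        unfolding c_def by (rule Mx_indep) (use V in auto)
    qed
    also have "\<dots> = c 0 + (\<Sum>j'=1..k. ?x i j' * (c j' - c 0))" by (rule sum_wt)
    also have "(\<Sum>j'=1..k. ?x i j' * (c j' - c 0)) = t * (c j - c 0) + (\<Sum>j'\<in>{1..k}-{j}. ?x i j' * (c j' - c 0))"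
      using assms(3) by (subst sum.remove[of _ j]) auto
    also have "(\<Sum>j'\<in>{1..k}-{j}. ?x i j' * (c j' - c 0)) = (\<Sum>j'\<in>{1..k}-{j}. x i j' * (c j' - c 0))"
      by (intro sum.cong) auto
    finally show ?thesis unfolding A_def by (simp only: ac_simps)
  qed
  have "((\<lambda>t. A + t * (c j - c 0)) has_real_derivative (c j - c 0)) (at (x i j))"
    by (auto intro!: derivative_eq_intros)
  then have "deriv (\<lambda>t. Mx k V h (x(i := (x i)(j := t)))) (x i j) = c j - c 0"
    unfolding fn by (rule DERIV_imp_deriv)
  moreover have "Dfun k V h i j x = c j - c 0"
    unfolding Dfun_def c_def W_def[symmetric] by (rule Mx_diff)
  ultimately show ?thesis unfolding partial_def by simp
qed

definition sel :: "nat \<Rightarrow> nat \<Rightarrow> (nat \<Rightarrow> nat set) \<Rightarrow> (nat \<Rightarrow> nat)" where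
  "sel n k S = (\<lambda>v. if v \<in> {1..n} then (if \<exists>l\<in>{1..k}. v \<in> S l then (THE l. l \<in> {1..k} \<and> v \<in> S l) else 0) else undefined)"

lemma the_l:
  assumes "S \<in> ktuples n k" "l \<in> {1..k}" "v \<in> S l"
  shows "(THE l. l \<in> {1..k} \<and> v \<in> S l) = l"
  using assms unfolding ktuples_def by (intro the_equality) blast+

lemma tup_in: "tup n k \<sigma> \<in> ktuples n k"
  unfolding tup_def ktuples_def by auto

lemma sel_tup: "\<sigma> \<in> PiE {1..n} (\<lambda>_. {0..k}) \<Longrightarrow> sel n k (tup n k \<sigma>) = \<sigma>"
proof (rule ext)
  fix v assume s: "\<sigma> \<in> PiE {1..n} (\<lambda>_. {0..k})"
  show "sel n k (tup n k \<sigma>) v = \<sigma> v"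
  proof (cases "v \<in> {1..n}")
    case True
    show ?thesis
    proof (cases "\<sigma> v = 0")
      case True with \<open>v \<in> {1..n}\<close> show ?thesis unfolding sel_def tup_def by auto
    next
      case False
      then have "\<sigma> v \<in> {1..k}" using s True by auto
      moreover have "v \<in> tup n k \<sigma> (\<sigma> v)" using True \<open>\<sigma> v \<in> {1..k}\<close> unfolding tup_def by auto
      ultimately show ?thesis using True the_l[OF tup_in] unfolding sel_def by auto
    qed
  next
    case False with s show ?thesis unfolding sel_def by auto
  qed
qed

lemma sel_in: "S \<in> ktuples n k \<Longrightarrow> sel n k S \<in> PiE {1..n} (\<lambda>_. {0..k})"
proof -
  assume S: "S \<in> ktuples n k"
  have "sel n k S v \<in> {0..k}" if "v \<in> {1..n}" for v
  proof (cases "\<exists>l\<in>{1..k}. v \<in> S l")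
    case True
    then obtain l where "l \<in> {1..k}" "v \<in> S l" by blast
    then show ?thesis using the_l[OF S] that unfolding sel_def by auto
  qed (use that in \<open>auto simp: sel_def\<close>)
  moreover have "sel n k S \<in> extensional {1..n}" unfolding sel_def extensional_def by auto
  ultimately show ?thesis by (simp add: PiE_iff)
qed

lemma tup_sel: "S \<in> ktuples n k \<Longrightarrow> tup n k (sel n k S) = S"
proof (rule ext)
  fix l assume S: "S \<in> ktuples n k"
  show "tup n k (sel n k S) l = S l"
  proof (cases "l \<in> {1..k}")
    case True
    have "u \<in> S l" if "u \<in> {1..n}" "sel n k S u = l" for u
    proof -
      have "\<exists>l\<in>{1..k}. u \<in> S l"
      proof (rule ccontr)
        assume "\<not> (\<exists>l\<in>{1..k}. u \<in> S l)"
        then have "sel n k S u = 0" using that(1) unfolding sel_def by simp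
        with that(2) True show False by simp
      qed
      then obtain l' where l': "l' \<in> {1..k}" "u \<in> S l'" by blast
      then have "sel n k S u = l'" using the_l[OF S] that(1) unfolding sel_def by auto
      with that l' show ?thesis by simp
    qed
    moreover have "u \<in> {1..n} \<and> sel n k S u = l" if "u \<in> S l" for u
    proof -
      have "u \<in> {1..n}" using S True that unfolding ktuples_def by blast
      then show ?thesis using the_l[OF S True that] True that unfolding sel_def by auto
    qed
    ultimately have "{u \<in> {1..n}. sel n k S u = l} = S l" by blast
    then show ?thesis using True unfolding tup_def by simp
  next
    case False with S show ?thesis unfolding tup_def ktuples_def by auto
  qed
qed

lemma term_eq:
  assumes s: "\<sigma> \<in> PiE {1..n} (\<lambda>_. {0..k})"
  shows "(\<Prod>j\<in>{1..k}. \<Prod>i\<in>tup n k \<sigma> j. x i j) * (\<Prod>i\<in>{1..n} - (\<Union>j\<in>{1..k}. tup n k \<sigma> j). 1 - (\<Sum>j=1..k. x i j))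
     = (\<Prod>v\<in>{1..n}. wt k x v (\<sigma> v))"
proof -
  let ?A = "{v\<in>{1..n}. \<sigma> v \<noteq> 0}" and ?B = "{v\<in>{1..n}. \<sigma> v = 0}"
  have U: "(\<Union>j\<in>{1..k}. tup n k \<sigma> j) = ?A" using s unfolding tup_def by fastforce
  have "(\<Prod>j\<in>{1..k}. \<Prod>i\<in>tup n k \<sigma> j. x i j) = (\<Prod>j\<in>{1..k}. \<Prod>i\<in>tup n k \<sigma> j. x i (\<sigma> i))"
    by (intro prod.cong refl) (auto simp: tup_def split: if_splits)
  also have "\<dots> = (\<Prod>i\<in>(\<Union>j\<in>{1..k}. tup n k \<sigma> j). x i (\<sigma> i))"
    by (rule prod.UNION_disjoint[symmetric]) (auto simp: tup_def)
  also have "\<dots> = (\<Prod>i\<in>?A. wt k x i (\<sigma> i))" unfolding U by (intro prod.cong) (auto simp: wt_def)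
  finally have 1: "(\<Prod>j\<in>{1..k}. \<Prod>i\<in>tup n k \<sigma> j. x i j) = (\<Prod>i\<in>?A. wt k x i (\<sigma> i))" .
  have 2: "(\<Prod>i\<in>{1..n} - (\<Union>j\<in>{1..k}. tup n k \<sigma> j). 1 - (\<Sum>j=1..k. x i j)) = (\<Prod>i\<in>?B. wt k x i (\<sigma> i))"
    unfolding U by (intro prod.cong) (auto simp: wt_def)
  have "(\<Prod>v\<in>{1..n}. wt k x v (\<sigma> v)) = (\<Prod>v\<in>?A \<union> ?B. wt k x v (\<sigma> v))"
    by (intro prod.cong) auto
  also have "\<dots> = (\<Prod>i\<in>?A. wt k x i (\<sigma> i)) * (\<Prod>i\<in>?B. wt k x i (\<sigma> i))"
    by (rule prod.union_disjoint) auto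
  finally show ?thesis using 1 2 by simp
qed

lemma F_eq: "multilinear_ext n k f x = Mx k {1..n} (\<lambda>\<sigma>. f (tup n k \<sigma>)) x"
proof -
  have "Mx k {1..n} (\<lambda>\<sigma>. f (tup n k \<sigma>)) x = multilinear_ext n k f x"
    unfolding Mx_def multilinear_ext_def
  proof (rule sum.reindex_bij_witness[where i="sel n k" and j="tup n k"])
    fix \<sigma> assume s: "\<sigma> \<in> PiE {1..n} (\<lambda>_. {0..k})"
    show "sel n k (tup n k \<sigma>) = \<sigma>" using s by (rule sel_tup)
    show "tup n k \<sigma> \<in> ktuples n k" by (rule tup_in)
    show "f (tup n k \<sigma>) * (\<Prod>j\<in>{1..k}. \<Prod>i\<in>tup n k \<sigma> j. x i j) * (\<Prod>i\<in>{1..n} - (\<Union>j\<in>{1..k}. tup n k \<sigma> j). 1 - (\<Sum>j=1..k. x i j))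
       = f (tup n k \<sigma>) * (\<Prod>v\<in>{1..n}. wt k x v (\<sigma> v))"
      using term_eq[OF s, of x] by (simp add: mult.assoc)
  next
    fix S assume S: "S \<in> ktuples n k"
    show "tup n k (sel n k S) = S" using S by (rule tup_sel)
    show "sel n k S \<in> PiE {1..n} (\<lambda>_. {0..k})" using S by (rule sel_in)
  qed
  then show ?thesis by simp
qed

lemma submod_g:
  assumes "k_submodular n k f" "i \<noteq> v" "j \<in> {1..k}" "j' \<in> {1..k}"
  shows "f (tup n k (\<tau>(v:=j', i:=j))) - f (tup n k (\<tau>(v:=j', i:=0)))
    \<le> f (tup n k (\<tau>(v:=0, i:=j))) - f (tup n k (\<tau>(v:=0, i:=0)))"
proof -
  let ?A = "\<tau>(v:=0, i:=j)" and ?B = "\<tau>(v:=j', i:=0)"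
  have m: "kmeet (tup n k ?A) (tup n k ?B) = tup n k (\<tau>(v:=0, i:=0))"
  proof (rule ext)
    fix l show "kmeet (tup n k ?A) (tup n k ?B) l = tup n k (\<tau>(v:=0, i:=0)) l"
      unfolding kmeet_def tup_def using assms(2-4) by auto
  qed
  have jn: "kjoin k (tup n k ?A) (tup n k ?B) = tup n k (\<tau>(v:=j', i:=j))"
  proof (rule ext)
    fix l show "kjoin k (tup n k ?A) (tup n k ?B) l = tup n k (\<tau>(v:=j', i:=j)) l"
    proof (cases "l \<in> {1..k}")
      case True
      have "u \<in> kjoin k (tup n k ?A) (tup n k ?B) l \<longleftrightarrow> u \<in> tup n k (\<tau>(v:=j', i:=j)) l" for u
      proof (cases "u = i")
        case True
        then show ?thesis using \<open>l \<in> {1..k}\<close> assms(2-4) unfolding kjoin_def tup_def by auto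
      next
        case ui: False
        show ?thesis
        proof (cases "u = v")
          case True
          then show ?thesis using \<open>l \<in> {1..k}\<close> ui assms(2-4) unfolding kjoin_def tup_def by auto
        next
          case False
          then show ?thesis using \<open>l \<in> {1..k}\<close> ui assms(2-4) unfolding kjoin_def tup_def by auto
        qed
      qed
      then show ?thesis by blast
    next
      case False then show ?thesis unfolding kjoin_def tup_def by auto
    qed
  qed
  have "f (tup n k ?A) + f (tup n k ?B) \<ge> f (kmeet (tup n k ?A) (tup n k ?B)) + f (kjoin k (tup n k ?A) (tup n k ?B))"
    using assms(1) tup_in unfolding k_submodular_def by blast
  then show ?thesis unfolding m jn by simp
qed

lemma aff_bounds:
  fixes a b s p q :: real
  assumes "a \<le> s" "s \<le> b"
  shows "p + s * q \<le> max (p + a * q) (p + b * q)" "min (p + a * q) (p + b * q) \<le> p + s * q"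
proof -
  have "s * q \<le> max (a * q) (b * q) \<and> min (a * q) (b * q) \<le> s * q"
  proof (cases "q \<ge> 0")
    case True
    then have "a * q \<le> s * q" "s * q \<le> b * q" using assms by (auto intro: mult_right_mono)
    then show ?thesis by auto
  next
    case False
    then have "s * q \<le> a * q" "b * q \<le> s * q" using assms by (auto intro: mult_right_mono_neg)
    then show ?thesis by auto
  qed
  then show "p + s * q \<le> max (p + a * q) (p + b * q)" "min (p + a * q) (p + b * q) \<le> p + s * q"
    by auto
qed

lemma line_interval: "is_interval {t. line_pt x t d \<in> polytopeP n k}"
  unfolding is_interval_1
proof (intro ballI allI impI)
  fix a b s assume a: "a \<in> {t. line_pt x t d \<in> polytopeP n k}" and b: "b \<in> {t. line_pt x t d \<in> polytopeP n k}"
    and s: "a \<le> s \<and> s \<le> b"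
  have sm: "(\<Sum>j=1..k. line_pt x t d i j) = (\<Sum>j=1..k. x i j) + t * (\<Sum>j=1..k. d i j)" for t i
    by (simp add: line_pt_def sum.distrib sum_distrib_left)
  show "s \<in> {t. line_pt x t d \<in> polytopeP n k}"
    unfolding mem_Collect_eq polytopeP_def
  proof (intro ballI conjI)
    fix i j assume i: "i \<in> {1..n}" and j: "j \<in> {1..k}"
    have "0 \<le> line_pt x a d i j" "line_pt x a d i j \<le> 1" "0 \<le> line_pt x b d i j" "line_pt x b d i j \<le> 1"
      using a b i j unfolding polytopeP_def by auto
    then show "0 \<le> line_pt x s d i j" "line_pt x s d i j \<le> 1"
      using aff_bounds[OF conjunct1[OF s] conjunct2[OF s], of "x i j" "d i j"] unfolding line_pt_def by auto
  next
    fix i assume i: "i \<in> {1..n}"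
    have "(\<Sum>j=1..k. line_pt x a d i j) \<le> 1" "(\<Sum>j=1..k. line_pt x b d i j) \<le> 1"
      using a b i unfolding polytopeP_def by auto
    then show "(\<Sum>j=1..k. line_pt x s d i j) \<le> 1"
      using aff_bounds(1)[OF conjunct1[OF s] conjunct2[OF s], of "\<Sum>j=1..k. x i j" "\<Sum>j=1..k. d i j"]
      unfolding sm by auto
  qed
qed

lemma okP: "x \<in> polytopeP n k \<Longrightarrow> v \<in> {1..n} \<Longrightarrow> okrow k x v"
  unfolding polytopeP_def okrow_def by auto

lemma sum_basis:
  assumes "i1 \<in> V" "j1 \<in> K" "finite V" "finite K"
  shows "(\<Sum>i\<in>V. \<Sum>j\<in>K. basis_vec i1 j1 i j * D i j) = D i1 j1"
proof -
  have e: "basis_vec i1 j1 i j * D i j = (if i = i1 then (if j = j1 then D i1 j1 else 0) else 0)" for i j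
    by (simp add: basis_vec_def)
  show ?thesis unfolding e using assms by (simp add: sum.If_cases)
qed

theorem mainTheorem3:
  fixes n k :: nat and f :: "(nat \<Rightarrow> nat set) \<Rightarrow> real"
  assumes "k \<ge> 1"
    and "k_submodular n k f"
  defines "F \<equiv> multilinear_ext n k f"
  shows
    "(\<forall>x\<in>polytopeP n k. \<forall>d. (\<forall>i\<in>{1..n}. \<forall>j\<in>{1..k}. d i j \<ge> 0) \<longrightarrow>
        concave_on {t. line_pt x t d \<in> polytopeP n k} (\<lambda>t. F (line_pt x t d)))
   \<and> (\<forall>x\<in>polytopeP n k. \<forall>i1\<in>{1..n}. \<forall>i2\<in>{1..n}. \<forall>j1\<in>{1..k}. \<forall>j2\<in>{1..k}. i1 \<noteq> i2 \<longrightarrow>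
        (let d = (\<lambda>a b. basis_vec i1 j1 a b - basis_vec i2 j2 a b) in
         convex_on {t. line_pt x t d \<in> polytopeP n k} (\<lambda>t. F (line_pt x t d))))
   \<and> (\<forall>i\<in>{1..n}. \<forall>j\<in>{1..k}. \<forall>x\<in>polytopeP n k. \<forall>y\<in>polytopeP n k.
        (\<forall>i'\<in>{1..n}. i' \<noteq> i \<longrightarrow> (\<forall>j'\<in>{1..k}. x i' j' = y i' j')) \<longrightarrow>
        partial F i j x = partial F i j y)
   \<and> (\<forall>x\<in>polytopeP n k. \<forall>y\<in>polytopeP n k.
        (\<forall>i\<in>{1..n}. \<forall>j\<in>{1..k}. x i j \<le> y i j) \<longrightarrow>
        (\<forall>i\<in>{1..n}. \<forall>j\<in>{1..k}. partial F i j x \<ge> partial F i j y))"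
proof -
  let ?V = "{1..n}" and ?P = "polytopeP n k"
  define g where "g = (\<lambda>\<sigma>. f (tup n k \<sigma>))"
  have Feq: "F = Mx k ?V g" unfolding F_def g_def by (rule ext, rule F_eq)
  have pD: "partial F i j x = Dfun k ?V g i j x" if "i \<in> ?V" "j \<in> {1..k}" for i j x
    unfolding Feq by (rule partial_Mx) (use that in auto)
  have anti: "Dfun k ?V g i j y \<le> Dfun k ?V g i j x"
    if "i \<in> ?V" "j \<in> {1..k}" "x \<in> ?P" "y \<in> ?P" "\<forall>v\<in>?V-{i}. \<forall>j'\<in>{1..k}. x v j' \<le> y v j'" for i j x y
    unfolding Dfun_def
  proof (rule Mx_anti)
    show "\<forall>\<tau>. \<forall>v\<in>?V-{i}. \<forall>j'\<in>{1..k}. g (\<tau>(v := j', i := j)) - g (\<tau>(v := j', i := 0))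
       \<le> g (\<tau>(v := 0, i := j)) - g (\<tau>(v := 0, i := 0))"
      unfolding g_def using submod_g[OF assms(2)] that(2) by auto
  qed (use that okP in auto)
  have der: "((\<lambda>t. F (line_pt x t d)) has_real_derivative
      (\<Sum>i\<in>?V. \<Sum>j=1..k. d i j * Dfun k ?V g i j (line_pt x t d))) (at t)" for x d t
    unfolding Feq by (rule Mx_deriv) simp
  have conn: "connected {t. line_pt x t d \<in> ?P}" for x d
    using line_interval is_interval_connected_1 by blast
  show ?thesis
  proof (intro conjI)
    show "\<forall>x\<in>?P. \<forall>d::nat\<Rightarrow>nat\<Rightarrow>real. (\<forall>i\<in>{1..n}. \<forall>j\<in>{1..k}. d i j \<ge> 0) \<longrightarrow>
        concave_on {t. line_pt x t d \<in> ?P} (\<lambda>t. F (line_pt x t d))"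
    proof (intro ballI allI impI)
      fix x and d :: "nat \<Rightarrow> nat \<Rightarrow> real" assume x: "x \<in> ?P" and d: "\<forall>i\<in>{1..n}. \<forall>j\<in>{1..k}. d i j \<ge> 0"
      show "concave_on {t. line_pt x t d \<in> ?P} (\<lambda>t. F (line_pt x t d))"
        unfolding concave_on_def
      proof (rule convex_on_realI[where f'="\<lambda>t. - (\<Sum>i\<in>?V. \<Sum>j=1..k. d i j * Dfun k ?V g i j (line_pt x t d))"])
        show "connected {t. line_pt x t d \<in> ?P}" by (rule conn)
        fix t show "((\<lambda>t. - F (line_pt x t d)) has_real_derivative
           - (\<Sum>i\<in>?V. \<Sum>j=1..k. d i j * Dfun k ?V g i j (line_pt x t d))) (at t)"
          by (rule DERIV_minus, rule der)
      next
        fix t1 t2 assume t1: "t1 \<in> {t. line_pt x t d \<in> ?P}" and t2: "t2 \<in> {t. line_pt x t d \<in> ?P}" and le: "t1 \<le> t2"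
        have "(\<Sum>i\<in>?V. \<Sum>j=1..k. d i j * Dfun k ?V g i j (line_pt x t2 d))
            \<le> (\<Sum>i\<in>?V. \<Sum>j=1..k. d i j * Dfun k ?V g i j (line_pt x t1 d))"
        proof (intro sum_mono mult_left_mono)
          fix i j assume i: "i \<in> ?V" and j: "j \<in> {1..k}"
          show "0 \<le> d i j" using d i j by auto
          show "Dfun k ?V g i j (line_pt x t2 d) \<le> Dfun k ?V g i j (line_pt x t1 d)"
          proof (rule anti)
            show "\<forall>v\<in>?V-{i}. \<forall>j'\<in>{1..k}. line_pt x t1 d v j' \<le> line_pt x t2 d v j'"
              using d le by (auto simp: line_pt_def intro: mult_right_mono)
          qed (use i j t1 t2 in auto)
        qed
        then show "- (\<Sum>i\<in>?V. \<Sum>j=1..k. d i j * Dfun k ?V g i j (line_pt x t1 d))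
          \<le> - (\<Sum>i\<in>?V. \<Sum>j=1..k. d i j * Dfun k ?V g i j (line_pt x t2 d))" by simp
      qed
    qed
  next
    show "\<forall>x\<in>?P. \<forall>i1\<in>{1..n}. \<forall>i2\<in>{1..n}. \<forall>j1\<in>{1..k}. \<forall>j2\<in>{1..k}. i1 \<noteq> i2 \<longrightarrow>
        (let d = (\<lambda>a b. basis_vec i1 j1 a b - basis_vec i2 j2 a b) in
         convex_on {t. line_pt x t d \<in> ?P} (\<lambda>t. F (line_pt x t d)))"
    proof (intro ballI impI)
      fix x i1 i2 j1 j2 assume x: "x \<in> ?P" and i1: "i1 \<in> ?V" and i2: "i2 \<in> ?V"
        and j1: "j1 \<in> {1..k}" and j2: "j2 \<in> {1..k}" and ne: "i1 \<noteq> i2"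
      define d where "d = (\<lambda>a b. basis_vec i1 j1 a b - basis_vec i2 j2 a b)"
      define D where "D t = Dfun k ?V g i1 j1 (line_pt x t d) - Dfun k ?V g i2 j2 (line_pt x t d)" for t
      have dsum: "(\<Sum>i\<in>?V. \<Sum>j=1..k. d i j * Dfun k ?V g i j (line_pt x t d)) = D t" for t
      proof -
        have "(\<Sum>i\<in>?V. \<Sum>j=1..k. d i j * Dfun k ?V g i j (line_pt x t d))
          = (\<Sum>i\<in>?V. \<Sum>j=1..k. basis_vec i1 j1 i j * Dfun k ?V g i j (line_pt x t d))
            - (\<Sum>i\<in>?V. \<Sum>j=1..k. basis_vec i2 j2 i j * Dfun k ?V g i j (line_pt x t d))"
          unfolding d_def by (simp add: sum_subtractf left_diff_distrib)
        also have "\<dots> = D t" unfolding D_def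
          by (subst sum_basis[OF i1 j1], simp, simp, subst sum_basis[OF i2 j2], simp, simp) (rule refl)
        finally show ?thesis .
      qed
      have "convex_on {t. line_pt x t d \<in> ?P} (\<lambda>t. F (line_pt x t d))"
      proof (rule convex_on_realI[where f'=D])
        show "connected {t. line_pt x t d \<in> ?P}" by (rule conn)
        fix t show "((\<lambda>t. F (line_pt x t d)) has_real_derivative D t) (at t)"
          using der[of x d t] unfolding dsum .
      next
        fix t1 t2 assume t1: "t1 \<in> {t. line_pt x t d \<in> ?P}" and t2: "t2 \<in> {t. line_pt x t d \<in> ?P}" and le: "t1 \<le> t2"
        have a1: "Dfun k ?V g i1 j1 (line_pt x t1 d) \<le> Dfun k ?V g i1 j1 (line_pt x t2 d)"
        proof (rule anti)
          show "\<forall>v\<in>?V-{i1}. \<forall>j'\<in>{1..k}. line_pt x t2 d v j' \<le> line_pt x t1 d v j'"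
            using le by (auto simp: line_pt_def d_def basis_vec_def)
        qed (use i1 j1 t1 t2 in auto)
        have a2: "Dfun k ?V g i2 j2 (line_pt x t2 d) \<le> Dfun k ?V g i2 j2 (line_pt x t1 d)"
        proof (rule anti)
          show "\<forall>v\<in>?V-{i2}. \<forall>j'\<in>{1..k}. line_pt x t1 d v j' \<le> line_pt x t2 d v j'"
            using le ne by (auto simp: line_pt_def d_def basis_vec_def)
        qed (use i2 j2 t1 t2 in auto)
        show "D t1 \<le> D t2" unfolding D_def using a1 a2 by simp
      qed
      then show "let d = (\<lambda>a b. basis_vec i1 j1 a b - basis_vec i2 j2 a b) in
         convex_on {t. line_pt x t d \<in> ?P} (\<lambda>t. F (line_pt x t d))"
        unfolding d_def Let_def .
    qed
  next
    show "\<forall>i\<in>{1..n}. \<forall>j\<in>{1..k}. \<forall>x\<in>?P. \<forall>y\<in>?P.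
        (\<forall>i'\<in>{1..n}. i' \<noteq> i \<longrightarrow> (\<forall>j'\<in>{1..k}. x i' j' = y i' j')) \<longrightarrow>
        partial F i j x = partial F i j y"
    proof (intro ballI impI)
      fix i j and x y :: "nat \<Rightarrow> nat \<Rightarrow> real" assume i: "i \<in> ?V" and j: "j \<in> {1..k}"
        and e: "\<forall>i'\<in>{1..n}. i' \<noteq> i \<longrightarrow> (\<forall>j'\<in>{1..k}. x i' j' = y i' j')"
      show "partial F i j x = partial F i j y"
        unfolding pD[OF i j] Dfun_def by (rule Mx_indep) (use e in auto)
    qed
  next
    show "\<forall>x\<in>?P. \<forall>y\<in>?P.
        (\<forall>i\<in>{1..n}. \<forall>j\<in>{1..k}. x i j \<le> y i j) \<longrightarrow>
        (\<forall>i\<in>{1..n}. \<forall>j\<in>{1..k}. partial F i j x \<ge> partial F i j y)"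
    proof (intro ballI impI)
      fix x y i j assume x: "x \<in> ?P" and y: "y \<in> ?P" and le: "\<forall>i\<in>{1..n}. \<forall>j\<in>{1..k}. x i j \<le> y i j"
        and i: "i \<in> ?V" and j: "j \<in> {1..k}"
      show "partial F i j x \<ge> partial F i j y"
        unfolding pD[OF i j] by (rule anti) (use i j x y le in auto)
    qed
  qed
qed

end
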